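(* Let $m\ge1$, $n\ge1$, $N>2n$, and let $\mathbf y$ be a stationary reciprocal process of order $n$ on $\mathbb Z_N$. For each $t$, write $\hat{\mathbb E}[\mathbf y(t)\mid \mathbf y(s),s\ne t]=-\sum_{k=-n,\,k\ne0}^{n}F_k(t)\,\mathbf y(t-k)$ (such a representation exists by reciprocity). Then the coefficient matrices $F_k(t)\in\mathbb R^{m\times m}$ can be taken independent of $t$; and if $\mathbf y$ is full rank, they are uniquely determined, do not depend on $t$, and are determined by the covariance lags $\Sigma_0,\Sigma_1,\dots,\Sigma_{2n}$ of the process.
   Context: A process on $\mathbb Z_N$ is a zero-mean second-order $\mathbb R^m$-valued process $\{\mathbf y(t)\}_{t=1}^N$, time indices taken modulo $N$, whose covariance $\boldsymbol\Sigma_N=\mathbb E\,\mathbf y\mathbf y^\top$ is symmetric block-circulant (its $(i,j)$ block depends only on $(i-j)\bmod N$); it is then stationary with lags $\Sigma_k=\mathbb E\,\mathbf y(t+k)\mathbf y(t)^\top$. It is full rank if $\boldsymbol\Sigma_N>0$. $\hat{\mathbb E}[\cdot\mid\cdot]$ is orthogonal projection onto the closed linear span of the scalar components of the conditioning variables. Subspaces $\mathcal A,\mathcal B$ are conditionally orthogonal given $\mathcal C$ if $a-\hat{\mathbb E}[a\mid\mathcal C]$ and $b-\hat{\mathbb E}[b\mid\mathcal C]$ are uncorrelated for all $a\in\mathcal A$, $b\in\mathcal B$. The process is reciprocal of order $n$ if for every cyclic interval $(t_1,t_2)$ the variables $\{\mathbf y(t):t\in(t_1,t_2)\}$ are conditionally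 orthogonal to $\{\mathbf y(s):s\notin(t_1,t_2)\}$ given $\mathbf y(t_1-n+1),\dots,\mathbf y(t_1),\mathbf y(t_2),\dots,\mathbf y(t_2+n-1)$; in particular $\hat{\mathbb E}[\mathbf y(t)\mid\mathbf y(s),s\ne t]=\hat{\mathbb E}[\mathbf y(t)\mid \mathbf y(t-n),\dots,\mathbf y(t-1),\mathbf y(t+1),\dots,\mathbf y(t+n)]$. *)

theory Defs
  imports "HOL-Analysis.Analysis"
begin

text \<open>A second-order process on Z_N is modelled abstractly inside a real inner product
space 'h (the Hilbert space of zero-mean finite-variance random variables, inner product
= E[a b]).  y t i (t < N, i < m) is the i-th scalar component of y(t).\<close>

definition ymod :: "(nat \<Rightarrow> nat \<Rightarrow> 'h) \<Rightarrow> nat \<Rightarrow> int \<Rightarrow> nat \<Rightarrow> 'h" where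
  "ymod y N t i = y (nat (t mod int N)) i"

definition comps :: "(nat \<Rightarrow> nat \<Rightarrow> 'h) \<Rightarrow> nat \<Rightarrow> nat set \<Rightarrow> 'h set" where
  "comps y m T = {y t i | t i. t \<in> T \<and> i < m}"

definition is_proj :: "'h::real_inner set \<Rightarrow> 'h \<Rightarrow> 'h \<Rightarrow> bool" where
  "is_proj C x p \<longleftrightarrow> p \<in> span C \<and> (\<forall>c\<in>C. inner (x - p) c = 0)"

definition proj :: "'h::real_inner set \<Rightarrow> 'h \<Rightarrow> 'h" where
  "proj C x = (THE p. is_proj C x p)"

definition cond_orth :: "'h::real_inner set \<Rightarrow> 'h set \<Rightarrow> 'h set \<Rightarrow> bool" where
  "cond_orth A B C \<longleftrightarrow>
     (\<forall>a\<in>span A. \<forall>b\<in>span B. inner (a - proj C a) (b - proj C b) = 0)"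

text \<open>Covariance lag Sigma_k = E y(t+k) y(t)^T, entry (i,j), computed at t = 0.\<close>
definition lag :: "(nat \<Rightarrow> nat \<Rightarrow> 'h::real_inner) \<Rightarrow> nat \<Rightarrow> int \<Rightarrow> nat \<Rightarrow> nat \<Rightarrow> real" where
  "lag y N k i j = inner (ymod y N k i) (y 0 j)"

definition stationary :: "(nat \<Rightarrow> nat \<Rightarrow> 'h::real_inner) \<Rightarrow> nat \<Rightarrow> nat \<Rightarrow> bool" where
  "stationary y m N \<longleftrightarrow>
     (\<forall>t<N. \<forall>s<N. \<forall>i<m. \<forall>j<m.
        inner (y t i) (y s j) = inner (ymod y N (int t - int s) i) (y 0 j))"

text \<open>Full rank: Sigma_N positive definite.\<close>
definition full_rank :: "(nat \<Rightarrow> nat \<Rightarrow> 'h::real_inner) \<Rightarrow> nat \<Rightarrow> nat \<Rightarrow> bool" where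
  "full_rank y m N \<longleftrightarrow>
     (\<forall>c::nat \<Rightarrow> nat \<Rightarrow> real. (\<exists>t<N. \<exists>i<m. c t i \<noteq> 0) \<longrightarrow>
        (\<Sum>t<N. \<Sum>s<N. \<Sum>i<m. \<Sum>j<m. c t i * c s j * inner (y t i) (y s j)) > 0)"

definition cyc_interval :: "nat \<Rightarrow> int \<Rightarrow> int \<Rightarrow> nat set" where
  "cyc_interval N t1 t2 =
     {nat ((t1 + j) mod int N) | j. 0 < j \<and> j < (t2 - t1) mod int N}"

definition cyc_boundary :: "nat \<Rightarrow> nat \<Rightarrow> int \<Rightarrow> int \<Rightarrow> nat set" where
  "cyc_boundary N n t1 t2 =
     {nat ((t1 - j) mod int N) | j. 0 \<le> j \<and> j < int n}
     \<union> {nat ((t2 + j) mod int N) | j. 0 \<le> j \<and> j < int n}"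

definition reciprocal :: "(nat \<Rightarrow> nat \<Rightarrow> 'h::real_inner) \<Rightarrow> nat \<Rightarrow> nat \<Rightarrow> nat \<Rightarrow> bool" where
  "reciprocal y m N n \<longleftrightarrow>
     (\<forall>t1 t2. cond_orth (comps y m (cyc_interval N t1 t2))
                        (comps y m ({0..<N} - cyc_interval N t1 t2))
                        (comps y m (cyc_boundary N n t1 t2)))"

text \<open>F (k,i,j) = (F_k)_{ij} represents the one-step interpolator at time t:
  E^[y(t) | y(s), s <> t] = - sum_{k=-n..n, k<>0} F_k y(t-k).\<close>
definition represents ::
  "(nat \<Rightarrow> nat \<Rightarrow> 'h::real_inner) \<Rightarrow> nat \<Rightarrow> nat \<Rightarrow> nat \<Rightarrow> nat \<Rightarrow> (int \<Rightarrow> nat \<Rightarrow> nat \<Rightarrow> real) \<Rightarrow> bool" where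
  "represents y m N n t F \<longleftrightarrow>
     (\<forall>i<m. proj (comps y m ({0..<N} - {t})) (y t i) =
        - (\<Sum>k\<in>{-int n..int n} - {0}. \<Sum>j<m. F k i j *\<^sub>R ymod y N (int t - k) j))"

end

theory Submission
  imports Defs
begin

lemma orth_span_gen:
  fixes v w :: "'h::real_inner"
  assumes "\<And>c. c \<in> C \<Longrightarrow> inner v c = 0" "w \<in> span C"
  shows "inner v w = 0"
  using orthogonal_to_span[OF assms(2), of v] assms(1) by (simp add: orthogonal_def)

lemma is_proj_unique:
  assumes "is_proj C x p" "is_proj C x q"
  shows "p = q"
proof -
  have d: "p - q \<in> span C" using assms by (simp add: is_proj_def span_diff)
  have "\<And>c. c \<in> C \<Longrightarrow> inner (p - q) c = 0"
  proof -
    fix c assume "c \<in> C"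
    then have "inner (x - p) c = 0" "inner (x - q) c = 0" using assms by (auto simp: is_proj_def)
    moreover have "p - q = (x - q) - (x - p)" by simp
    ultimately show "inner (p - q) c = 0" by (metis inner_diff_left diff_self)
  qed
  from orth_span_gen[OF this d] show ?thesis by simp
qed

lemma proj_eq: "is_proj C x p \<Longrightarrow> proj C x = p"
  unfolding proj_def by (rule the_equality) (auto intro: is_proj_unique)

lemma proj_exists:
  fixes C :: "'h::real_inner set"
  assumes "finite C" shows "\<exists>p. is_proj C x p"
  using assms
proof (induction C arbitrary: x rule: finite_induct)
  case empty
  show ?case by (rule exI[of _ 0]) (simp add: is_proj_def span_zero)
next
  case (insert a C)
  obtain q where q: "is_proj C a q" using insert.IH by blast
  obtain r where r: "is_proj C x r" using insert.IH by blast
  define e where "e = a - q"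
  have eC: "\<And>c. c \<in> C \<Longrightarrow> inner e c = 0" using q by (simp add: is_proj_def e_def)
  have qsp: "q \<in> span (insert a C)" using q by (auto simp: is_proj_def intro: span_mono[THEN subsetD])
  have rsp: "r \<in> span (insert a C)" using r by (auto simp: is_proj_def intro: span_mono[THEN subsetD])
  have esp: "e \<in> span (insert a C)" unfolding e_def using qsp by (simp add: span_diff span_base)
  define p where "p = r + (inner (x - r) e / inner e e) *\<^sub>R e"
  have psp: "p \<in> span (insert a C)" unfolding p_def using rsp esp by (simp add: span_add span_scale)
  have pC: "inner (x - p) c = 0" if "c \<in> C" for c
  proof -
    have "inner (x - r) c = 0" using r that by (simp add: is_proj_def)
    moreover have "inner e c = 0" using eC that .
    ultimately show ?thesis unfolding p_def by (simp add: inner_diff_left inner_add_left algebra_simps)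
  qed
  have pq: "inner (x - p) q = 0"
    using orth_span_gen[OF pC] q by (simp add: is_proj_def)
  have pe: "inner (x - p) e = 0"
  proof (cases "e = 0")
    case True then show ?thesis by simp
  next
    case False
    then have "inner e e \<noteq> 0" by simp
    then show ?thesis unfolding p_def by (simp add: inner_diff_left inner_add_left)
  qed
  have "a = e + q" by (simp add: e_def)
  then have pa: "inner (x - p) a = 0" using pq pe by (simp add: inner_add_right)
  show ?case
    by (rule exI[of _ p]) (use psp pC pa in \<open>auto simp: is_proj_def\<close>)
qed

lemma span_image_coeffs:
  fixes f :: "'a \<Rightarrow> 'h::real_vector"
  assumes "finite A" "v \<in> span (f ` A)"
  shows "\<exists>c. v = (\<Sum>a\<in>A. c a *\<^sub>R f a)"
proof -
  let ?S = "{v. \<exists>c. v = (\<Sum>a\<in>A. c a *\<^sub>R f a)}"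
  have sub: "subspace ?S"
    unfolding subspace_def
  proof (intro conjI ballI allI)
    show "0 \<in> ?S" by (auto intro!: exI[of _ "\<lambda>_. 0"])
    fix u w assume "u \<in> ?S" "w \<in> ?S"
    then obtain c d where "u = (\<Sum>a\<in>A. c a *\<^sub>R f a)" "w = (\<Sum>a\<in>A. d a *\<^sub>R f a)" by blast
    then show "u + w \<in> ?S"
      by (auto intro!: exI[of _ "\<lambda>a. c a + d a"] simp: sum.distrib scaleR_add_left)
  next
    fix r :: real and u assume "u \<in> ?S"
    then obtain c where "u = (\<Sum>a\<in>A. c a *\<^sub>R f a)" by blast
    then show "r *\<^sub>R u \<in> ?S"
      by (auto intro!: exI[of _ "\<lambda>a. r * c a"] simp: scaleR_sum_right)
  qed
  have "f ` A \<subseteq> ?S"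
  proof
    fix v assume "v \<in> f ` A"
    then obtain b where b: "b \<in> A" "v = f b" by blast
    have "(\<Sum>a\<in>A. (if a = b then 1 else 0) *\<^sub>R f a) = f b"
      using assms(1) b(1) by (simp add: if_distrib[of "\<lambda>r. r *\<^sub>R _"] sum.delta cong: if_cong)
    then show "v \<in> ?S" using b by (auto intro!: exI[of _ "\<lambda>a. if a = b then 1 else 0"])
  qed
  then have "span (f ` A) \<subseteq> ?S" using sub by (rule span_minimal)
  then show ?thesis using assms(2) by blast
qed


definition KK :: "nat \<Rightarrow> int set" where "KK n = {-int n..int n} - {0}"

lemma ymod0[simp]: "ymod w N 0 i = w 0 i" by (simp add: ymod_def)

lemma ymod_nat: "t < N \<Longrightarrow> ymod w N (int t) i = w t i" by (simp add: ymod_def)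

lemma ymod_modeq: "a mod int N = b mod int N \<Longrightarrow> ymod w N a i = ymod w N b i"
  by (simp add: ymod_def)

lemma stat_inner:
  assumes "stationary w m N" "N > 0" "i < m" "j < m"
  shows "inner (ymod w N a i) (ymod w N b j) = lag w N (a - b) i j"
proof -
  define a' where "a' = nat (a mod int N)"
  define b' where "b' = nat (b mod int N)"
  have a': "a' < N" "int a' = a mod int N" using assms(2) by (auto simp: a'_def nat_less_iff)
  have b': "b' < N" "int b' = b mod int N" using assms(2) by (auto simp: b'_def nat_less_iff)
  have "inner (w a' i) (w b' j) = inner (ymod w N (int a' - int b') i) (w 0 j)"
    using assms(1) a'(1) b'(1) assms(3,4) unfolding stationary_def by blast
  moreover have "ymod w N (int a' - int b') i = ymod w N (a - b) i"
    by (rule ymod_modeq) (simp add: a'(2) b'(2) mod_diff_eq)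
  ultimately show ?thesis by (simp add: ymod_def lag_def a'_def b'_def)
qed

lemma lag_neg:
  assumes "stationary w m N" "N > 0" "i < m" "j < m"
  shows "lag w N (- d) i j = lag w N d j i"
proof -
  have "lag w N (0 - d) i j = inner (ymod w N 0 i) (ymod w N d j)"
    using stat_inner[OF assms, of 0 d] by simp
  also have "\<dots> = inner (ymod w N d j) (ymod w N 0 i)" by (simp add: inner_commute)
  also have "\<dots> = lag w N (d - 0) j i" using stat_inner[OF assms(1,2,4,3), of d 0] by simp
  finally show ?thesis by simp
qed

lemma KK_ne:
  assumes "k \<in> KK n" "N > 2 * n"
  shows "(t - k) mod int N \<noteq> t mod int N"
proof
  assume "(t - k) mod int N = t mod int N"
  then have "int N dvd (t - k - t)" by (simp only: mod_eq_dvd_iff)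
  then have "int N dvd k" by simp
  then obtain q where q: "k = int N * q" by (auto elim: dvdE)
  have "k \<noteq> 0" "\<bar>k\<bar> \<le> int n" using assms(1) by (auto simp: KK_def)
  then have "q \<noteq> 0" using q by auto
  then have "\<bar>q\<bar> \<ge> 1" by linarith
    then have "int N * 1 \<le> int N * \<bar>q\<bar>" by (intro mult_left_mono) auto
    then have "\<bar>k\<bar> \<ge> int N" using q by (simp add: abs_mult)
  then show False using \<open>\<bar>k\<bar> \<le> int n\<close> assms(2) by linarith
qed

lemma KK_inj:
  assumes "k1 \<in> KK n" "k2 \<in> KK n" "N > 2 * n" "(t - k1) mod int N = (t - k2) mod int N"
  shows "k1 = k2"
proof -
  have "int N dvd (k2 - k1)"
  proof -
    have "int N dvd ((t - k1) - (t - k2))" using assms(4) by (simp only: mod_eq_dvd_iff)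
    then show ?thesis by simp
  qed
  then obtain q where q: "k2 - k1 = int N * q" by (auto elim: dvdE)
  have b: "\<bar>k2 - k1\<bar> \<le> 2 * int n" using assms(1,2) by (auto simp: KK_def)
  show ?thesis
  proof (rule ccontr)
    assume "k1 \<noteq> k2"
    then have "q \<noteq> 0" using q by auto
    then have "\<bar>q\<bar> \<ge> 1" by linarith
    then have "int N * 1 \<le> int N * \<bar>q\<bar>" by (intro mult_left_mono) auto
    then have "\<bar>k2 - k1\<bar> \<ge> int N" using q by (simp add: abs_mult)
    then show False using b assms(3) by linarith
  qed
qed

lemma finite_KK: "finite (KK n)" by (simp add: KK_def)


lemma interval0:
  assumes "N > 2" shows "cyc_interval N (-1) 1 = {0}"
proof -
  have "(1 - (-1::int)) mod int N = 2" using assms by simp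
  moreover have "\<And>j::int. (0 < j \<and> j < 2) = (j = 1)" by arith
  ultimately show ?thesis unfolding cyc_interval_def by auto
qed

lemma boundary0:
  "cyc_boundary N n (-1) 1 = (\<lambda>k. nat ((- k) mod int N)) ` KK n"
proof (rule set_eqI, rule iffI)
  fix x assume "x \<in> cyc_boundary N n (-1) 1"
  then consider j where "0 \<le> j" "j < int n" "x = nat ((-1 - j) mod int N)"
    | j where "0 \<le> j" "j < int n" "x = nat ((1 + j) mod int N)"
    unfolding cyc_boundary_def by auto
  then show "x \<in> (\<lambda>k. nat ((- k) mod int N)) ` KK n"
  proof cases
    case 1
    then show ?thesis by (intro image_eqI[of _ _ "1 + j"]) (auto simp: KK_def)
  next
    case 2
    then show ?thesis by (intro image_eqI[of _ _ "- (1 + j)"]) (auto simp: KK_def add.commute)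
  qed
next
  fix x assume "x \<in> (\<lambda>k. nat ((- k) mod int N)) ` KK n"
  then obtain k where k: "k \<in> KK n" "x = nat ((- k) mod int N)" by blast
  show "x \<in> cyc_boundary N n (-1) 1"
  proof (cases "k > 0")
    case True
    then have "x = nat ((-1 - (k - 1)) mod int N)" "0 \<le> k - 1" "k - 1 < int n"
      using k by (auto simp: KK_def)
    then show ?thesis unfolding cyc_boundary_def by blast
  next
    case False
    then have "k < 0" using k by (auto simp: KK_def)
    then have "x = nat ((1 + (- k - 1)) mod int N)" "0 \<le> - k - 1" "- k - 1 < int n"
      using k by (auto simp: KK_def)
    then show ?thesis unfolding cyc_boundary_def by blast
  qed
qed

lemma comps_image:
  "comps w m (g ` K) = (\<lambda>(k,j). w (g k) j) ` (K \<times> {..<m})"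
  unfolding comps_def by auto

definition NB :: "(nat \<Rightarrow> nat \<Rightarrow> 'h) \<Rightarrow> nat \<Rightarrow> nat \<Rightarrow> nat \<Rightarrow> 'h set" where
  "NB w m N n = (\<lambda>(k,j). ymod w N (- k) j) ` (KK n \<times> {..<m})"

lemma comps_boundary0: "comps w m (cyc_boundary N n (-1) 1) = NB w m N n"
  unfolding boundary0 comps_image NB_def ymod_def by simp

lemma finite_NB: "finite (NB w m N n)"
  unfolding NB_def by (simp add: finite_KK)

lemma NB_sub:
  assumes "N > 2 * n"
  shows "NB w m N n \<subseteq> comps w m ({0..<N} - {0})"
proof
  fix x assume "x \<in> NB w m N n"
  then obtain k j where kj: "k \<in> KK n" "j < m" "x = ymod w N (- k) j" unfolding NB_def by auto
  have "(0 - k) mod int N \<noteq> 0 mod int N" by (rule KK_ne[OF kj(1) assms])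
  moreover have "(- k) mod int N < int N" "(- k) mod int N \<ge> 0" using assms by simp_all
  ultimately have "nat ((- k) mod int N) \<in> {0..<N} - {0}" by (auto simp: nat_less_iff)
  then show "x \<in> comps w m ({0..<N} - {0})" using kj unfolding comps_def ymod_def by blast
qed

lemma lemma_zero:
  fixes w :: "nat \<Rightarrow> nat \<Rightarrow> 'h::real_inner"
  assumes "reciprocal w m N n" "N > 2 * n" "n \<ge> 1" "i < m"
  shows "\<exists>p. is_proj (comps w m ({0..<N} - {0})) (w 0 i) p \<and> is_proj (NB w m N n) (w 0 i) p"
proof -
  let ?C = "NB w m N n"
  let ?R = "comps w m ({0..<N} - {0})"
  obtain p where p: "is_proj ?C (w 0 i) p" using proj_exists[OF finite_NB] by blast
  have co: "cond_orth (comps w m {0}) ?R ?C"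
    using assms(1) assms(2,3) unfolding reciprocal_def
    by (metis interval0 comps_boundary0 less_le_trans mult_le_mono2 numeral_le_one_iff
        semiring_norm(69) nat_mult_1_right le_less_trans one_add_one)
  have x: "w 0 i \<in> span (comps w m {0})" using assms(4) by (auto simp: comps_def intro!: span_base)
  have "inner (w 0 i - p) b = 0" if b: "b \<in> ?R" for b
  proof -
    obtain pb where pb: "is_proj ?C b pb" using proj_exists[OF finite_NB] by blast
    have "inner (w 0 i - proj ?C (w 0 i)) (b - proj ?C b) = 0"
      using co x b unfolding cond_orth_def by (auto intro: span_base)
    then have "inner (w 0 i - p) (b - pb) = 0" using proj_eq[OF p] proj_eq[OF pb] by simp
    moreover have "inner (w 0 i - p) pb = 0"
      using orth_span_gen[of ?C "w 0 i - p" pb] p pb by (auto simp: is_proj_def)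
    ultimately show ?thesis by (simp add: inner_diff_right)
  qed
  moreover have "p \<in> span ?R" using p span_mono[OF NB_sub[OF assms(2)]] by (auto simp: is_proj_def)
  ultimately show ?thesis using p by (auto simp: is_proj_def)
qed


lemma expand:
  fixes w :: "nat \<Rightarrow> nat \<Rightarrow> 'h::real_inner"
  assumes "stationary w m N" "N > 0" "i < m" "l < m"
  shows "inner (ymod w N a i + (\<Sum>k\<in>KK n. \<Sum>j<m. F k i j *\<^sub>R ymod w N (a - k) j)) (ymod w N b l)
    = lag w N (a - b) i l + (\<Sum>k\<in>KK n. \<Sum>j<m. F k i j * lag w N (a - k - b) j l)"
proof -
  have "(\<Sum>k\<in>KK n. \<Sum>j<m. F k i j * inner (ymod w N (a - k) j) (ymod w N b l))
      = (\<Sum>k\<in>KK n. \<Sum>j<m. F k i j * lag w N (a - k - b) j l)"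
    by (intro sum.cong refl) (simp add: stat_inner[OF assms(1,2) _ assms(4)])
  then show ?thesis
    by (simp add: inner_add_left inner_sum_left stat_inner[OF assms(1,2,3,4)])
qed

lemma finite_comps: "finite S \<Longrightarrow> finite (comps w m S)"
proof -
  assume "finite S"
  have "comps w m S = (\<lambda>(t,i). w t i) ` (S \<times> {..<m})" unfolding comps_def by auto
  then show ?thesis using \<open>finite S\<close> by simp
qed

lemma shift:
  fixes w :: "nat \<Rightarrow> nat \<Rightarrow> 'h::real_inner"
  assumes st: "stationary w m N" and N: "N > 2 * n" and r0: "represents w m N n 0 F" and t: "t < N"
  shows "represents w m N n t F"
  unfolding represents_def
proof (intro allI impI)
  fix i assume i: "i < m"
  have N0: "N > 0" using N by simp
  define S where "S = (\<lambda>a::int. (\<Sum>k\<in>KK n. \<Sum>j<m. F k i j *\<^sub>R ymod w N (a - k) j))"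
  let ?R0 = "comps w m ({0..<N} - {0})"
  let ?Rt = "comps w m ({0..<N} - {t})"
  have KKeq: "{-int n..int n} - {0} = KK n" by (simp add: KK_def)
  obtain p0 where p0: "is_proj ?R0 (w 0 i) p0" using proj_exists[OF finite_comps] by blast
  have "proj ?R0 (w 0 i) = - S (int 0)" using r0 i unfolding represents_def S_def KKeq by blast
  then have P0: "is_proj ?R0 (w 0 i) (- S 0)" using p0 proj_eq[OF p0] by simp
  have mem: "ymod w N (int t - k) j \<in> ?Rt" if "k \<in> KK n" "j < m" for k j
  proof -
    have "(int t - k) mod int N \<noteq> int t mod int N" by (rule KK_ne[OF that(1) N])
    moreover have "(int t - k) mod int N < int N" "(int t - k) mod int N \<ge> 0" using N0 by simp_all
    ultimately have "nat ((int t - k) mod int N) \<in> {0..<N} - {t}" using t by (auto simp: nat_less_iff nat_eq_iff)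
    then show ?thesis using that unfolding comps_def ymod_def by blast
  qed
  have sp: "- S (int t) \<in> span ?Rt"
    unfolding S_def using mem
    by (intro span_neg span_sum span_scale) (auto intro: span_base)
  have orth: "inner (w t i - - S (int t)) c = 0" if c: "c \<in> ?Rt" for c
  proof -
    obtain s l where sl: "s < N" "s \<noteq> t" "l < m" "c = w s l" using c unfolding comps_def by auto
    define s' where "s' = int s - int t"
    have "s' mod int N \<noteq> 0"
    proof
      assume "s' mod int N = 0"
      then have "int s mod int N = int t mod int N" unfolding s'_def by (simp add: mod_eq_dvd_iff dvd_eq_mod_eq_0)
      then show False using sl t by simp
    qed
    moreover have "s' mod int N < int N" "s' mod int N \<ge> 0" using N0 by simp_all
    ultimately have "nat (s' mod int N) \<in> {0..<N} - {0}" by (auto simp: nat_less_iff)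
    then have "ymod w N s' l \<in> ?R0" using sl unfolding comps_def ymod_def by blast
    then have "inner (w 0 i - - S 0) (ymod w N s' l) = 0" using P0 by (auto simp: is_proj_def)
    then have "inner (ymod w N 0 i + S 0) (ymod w N s' l) = 0" by simp
    then have z: "lag w N (0 - s') i l + (\<Sum>k\<in>KK n. \<Sum>j<m. F k i j * lag w N (0 - k - s') j l) = 0"
      unfolding S_def expand[OF st N0 i sl(3)] .
    have "inner (w t i - - S (int t)) c = inner (ymod w N (int t) i + S (int t)) (ymod w N (int s) l)"
      using sl t by (simp add: ymod_nat)
    also have "\<dots> = lag w N (int t - int s) i l + (\<Sum>k\<in>KK n. \<Sum>j<m. F k i j * lag w N (int t - k - int s) j l)"
      unfolding S_def expand[OF st N0 i sl(3)] ..
    also have "\<dots> = lag w N (0 - s') i l + (\<Sum>k\<in>KK n. \<Sum>j<m. F k i j * lag w N (0 - k - s') j l)"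
      by (simp add: s'_def algebra_simps)
    finally show ?thesis using z by simp
  qed
  have "proj ?Rt (w t i) = - S (int t)"
    by (rule proj_eq) (use sp orth in \<open>auto simp: is_proj_def\<close>)
  then show "proj ?Rt (w t i) = - (\<Sum>k\<in>{- int n..int n} - {0}. \<Sum>j<m. F k i j *\<^sub>R ymod w N (int t - k) j)"
    unfolding S_def KKeq .
qed


lemma exists_rep0:
  fixes w :: "nat \<Rightarrow> nat \<Rightarrow> 'h::real_inner"
  assumes "reciprocal w m N n" "N > 2 * n" "n \<ge> 1"
  shows "\<exists>F. represents w m N n 0 F"
proof -
  define f where "f = (\<lambda>(k,j). ymod w N (- k) j)"
  define A where "A = KK n \<times> {..<m}"
  let ?R0 = "comps w m ({0..<N} - {0})"
  have fin: "finite A" unfolding A_def by (simp add: finite_KK)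
  have "\<forall>i. \<exists>c. i < m \<longrightarrow> is_proj ?R0 (w 0 i) (\<Sum>a\<in>A. c a *\<^sub>R f a)"
  proof
    fix i show "\<exists>c. i < m \<longrightarrow> is_proj ?R0 (w 0 i) (\<Sum>a\<in>A. c a *\<^sub>R f a)"
    proof (cases "i < m")
      case True
      obtain p where p: "is_proj ?R0 (w 0 i) p" "is_proj (NB w m N n) (w 0 i) p"
        using lemma_zero[OF assms True] by blast
      have "p \<in> span (f ` A)" using p(2) unfolding is_proj_def NB_def f_def A_def by simp
      then obtain c where "p = (\<Sum>a\<in>A. c a *\<^sub>R f a)" using span_image_coeffs[OF fin] by blast
      then show ?thesis using p(1) by blast
    qed simp
  qed
  then obtain C where C: "\<And>i. i < m \<Longrightarrow> is_proj ?R0 (w 0 i) (\<Sum>a\<in>A. C i a *\<^sub>R f a)"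
    by (metis choice)
  define F where "F = (\<lambda>k i j. - C i (k, j))"
  have KKeq: "{-int n..int n} - {0} = KK n" by (simp add: KK_def)
  have "represents w m N n 0 F"
    unfolding represents_def KKeq
  proof (intro allI impI)
    fix i assume i: "i < m"
    have "(\<Sum>a\<in>A. C i a *\<^sub>R f a) = (\<Sum>k\<in>KK n. \<Sum>j<m. C i (k, j) *\<^sub>R ymod w N (- k) j)"
      unfolding A_def f_def by (simp add: sum.cartesian_product split_beta)
    then have "proj ?R0 (w 0 i) = (\<Sum>k\<in>KK n. \<Sum>j<m. C i (k, j) *\<^sub>R ymod w N (- k) j)"
      using proj_eq[OF C[OF i]] by simp
    then show "proj ?R0 (w 0 i) = - (\<Sum>k\<in>KK n. \<Sum>j<m. F k i j *\<^sub>R ymod w N (int 0 - k) j)"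
      by (simp add: F_def sum_negf)
  qed
  then show ?thesis by blast
qed

lemma lag_transfer:
  fixes y :: "nat \<Rightarrow> nat \<Rightarrow> 'h::real_inner" and z :: "nat \<Rightarrow> nat \<Rightarrow> 'g::real_inner"
  assumes sy: "stationary y m N" and sz: "stationary z m N" and N0: "N > 0"
    and L: "\<forall>k\<le>2 * n. \<forall>i<m. \<forall>j<m. lag z N (int k) i j = lag y N (int k) i j"
    and d: "\<bar>d\<bar> \<le> 2 * int n" and ij: "i < m" "j < m"
  shows "lag z N d i j = lag y N d i j"
proof (cases "d \<ge> 0")
  case True
  then have "d = int (nat d)" "nat d \<le> 2 * n" using d by auto
  then show ?thesis using L ij by metis
next
  case False
  then have e: "d = - int (nat (- d))" "nat (- d) \<le> 2 * n" using d by auto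
  have "lag z N d i j = lag z N (int (nat (- d))) j i" using lag_neg[OF sz N0 ij] e(1) by metis
  also have "\<dots> = lag y N (int (nat (- d))) j i" using L ij e(2) by blast
  also have "\<dots> = lag y N d i j" using lag_neg[OF sy N0 ij] e(1) by metis
  finally show ?thesis .
qed


lemma transfer_rep0:
  fixes y :: "nat \<Rightarrow> nat \<Rightarrow> 'h::real_inner" and z :: "nat \<Rightarrow> nat \<Rightarrow> 'g::real_inner"
  assumes sy: "stationary y m N" and sz: "stationary z m N" and rz: "reciprocal z m N n"
    and N: "N > 2 * n" and n1: "n \<ge> 1"
    and L: "\<forall>k\<le>2 * n. \<forall>i<m. \<forall>j<m. lag z N (int k) i j = lag y N (int k) i j"
    and ry: "represents y m N n 0 F"
  shows "represents z m N n 0 F"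
  unfolding represents_def
proof (intro allI impI)
  fix i assume i: "i < m"
  have N0: "N > 0" using N by simp
  have KKeq: "{-int n..int n} - {0} = KK n" by (simp add: KK_def)
  define Sy where "Sy = (\<Sum>k\<in>KK n. \<Sum>j<m. F k i j *\<^sub>R ymod y N (0 - k) j)"
  define Sz where "Sz = (\<Sum>k\<in>KK n. \<Sum>j<m. F k i j *\<^sub>R ymod z N (0 - k) j)"
  let ?R0y = "comps y m ({0..<N} - {0})"
  let ?R0z = "comps z m ({0..<N} - {0})"
  obtain p0 where p0: "is_proj ?R0y (y 0 i) p0" using proj_exists[OF finite_comps] by blast
  have "proj ?R0y (y 0 i) = - Sy" using ry i unfolding represents_def Sy_def KKeq by simp
  then have Py: "is_proj ?R0y (y 0 i) (- Sy)" using p0 proj_eq[OF p0] by simp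
  obtain pz where pz: "is_proj ?R0z (z 0 i) pz" "is_proj (NB z m N n) (z 0 i) pz"
    using lemma_zero[OF rz N n1 i] by blast
  have memz: "ymod z N (0 - k) j \<in> NB z m N n" if "k \<in> KK n" "j < m" for k j
    using that unfolding NB_def by force
  have sp: "- Sz \<in> span (NB z m N n)"
    unfolding Sz_def using memz
    by (intro span_neg span_sum span_scale) (auto intro: span_base)
  have orth: "inner (z 0 i - - Sz) c = 0" if c: "c \<in> NB z m N n" for c
  proof -
    obtain k' l where kl: "k' \<in> KK n" "l < m" "c = ymod z N (- k') l" using c unfolding NB_def by auto
    have b1: "\<bar>0 - - k'\<bar> \<le> 2 * int n" using kl(1) by (auto simp: KK_def)
    have b2: "\<bar>0 - k - - k'\<bar> \<le> 2 * int n" if "k \<in> KK n" for k using kl(1) that by (auto simp: KK_def)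
    have "inner (z 0 i - - Sz) c = inner (ymod z N 0 i + Sz) (ymod z N (- k') l)" using kl by simp
    also have "\<dots> = lag z N (0 - - k') i l + (\<Sum>k\<in>KK n. \<Sum>j<m. F k i j * lag z N (0 - k - - k') j l)"
      unfolding Sz_def by (rule expand[OF sz N0 i kl(2)])
    also have "\<dots> = lag y N (0 - - k') i l + (\<Sum>k\<in>KK n. \<Sum>j<m. F k i j * lag y N (0 - k - - k') j l)"
      using lag_transfer[OF sy sz N0 L b1 i kl(2)] lag_transfer[OF sy sz N0 L b2 _ kl(2)]
      by (intro arg_cong2[where f="(+)"] sum.cong refl) auto
    also have "\<dots> = inner (ymod y N 0 i + Sy) (ymod y N (- k') l)"
      unfolding Sy_def by (rule expand[OF sy N0 i kl(2), symmetric])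
    also have "\<dots> = inner (y 0 i - - Sy) (ymod y N (- k') l)" by simp
    also have "\<dots> = 0"
    proof -
      have "ymod y N (- k') l \<in> NB y m N n" using kl unfolding NB_def by force
      then have "ymod y N (- k') l \<in> ?R0y" by (rule subsetD[OF NB_sub[OF N]])
      then show ?thesis using Py by (simp add: is_proj_def)
    qed
    finally show ?thesis .
  qed
  have "is_proj (NB z m N n) (z 0 i) (- Sz)" using sp orth by (simp add: is_proj_def)
  then have "pz = - Sz" using is_proj_unique[OF pz(2)] by blast
  then have "proj ?R0z (z 0 i) = - Sz" using proj_eq[OF pz(1)] by simp
  then show "proj ?R0z (z 0 i) = - (\<Sum>k\<in>{- int n..int n} - {0}. \<Sum>j<m. F k i j *\<^sub>R ymod z N (int 0 - k) j)"
    unfolding KKeq Sz_def by simp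
qed


lemma quad:
  fixes w :: "nat \<Rightarrow> nat \<Rightarrow> 'h::real_inner"
  shows "(\<Sum>t<N. \<Sum>s<N. \<Sum>i<m. \<Sum>j<m. c t i * c s j * inner (w t i) (w s j))
    = inner (\<Sum>t<N. \<Sum>i<m. c t i *\<^sub>R w t i) (\<Sum>t<N. \<Sum>i<m. c t i *\<^sub>R w t i)"
proof -
  have "inner (\<Sum>t<N. \<Sum>i<m. c t i *\<^sub>R w t i) (\<Sum>t<N. \<Sum>i<m. c t i *\<^sub>R w t i)
     = (\<Sum>t<N. \<Sum>i<m. \<Sum>s<N. \<Sum>j<m. c t i * c s j * inner (w t i) (w s j))"
    unfolding inner_sum_left inner_scaleR_left
    unfolding inner_sum_right inner_scaleR_right
    by (simp add: sum_distrib_left mult.assoc)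
  also have "\<dots> = (\<Sum>t<N. \<Sum>s<N. \<Sum>i<m. \<Sum>j<m. c t i * c s j * inner (w t i) (w s j))"
    by (rule sum.cong[OF refl], rule sum.swap)
  finally show ?thesis by simp
qed

lemma uniq:
  fixes w :: "nat \<Rightarrow> nat \<Rightarrow> 'h::real_inner"
  assumes fr: "full_rank w m N" and N: "N > 2 * n" and t: "t < N"
    and rF: "represents w m N n t F" and rG: "represents w m N n t G"
    and k0: "k0 \<in> KK n" and i: "i < m" and j0: "j0 < m"
  shows "G k0 i j0 = F k0 i j0"
proof -
  have N0: "N > 0" using N by simp
  have KKeq: "{-int n..int n} - {0} = KK n" by (simp add: KK_def)
  define g where "g = (\<lambda>k. nat ((int t - k) mod int N))"
  define D where "D = (\<lambda>k j. G k i j - F k i j)"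
  have gN: "g k < N" for k using N0 by (simp add: g_def nat_less_iff)
  have wg: "w (g k) j = ymod w N (int t - k) j" for k j by (simp add: g_def ymod_def)
  have "(\<Sum>k\<in>KK n. \<Sum>j<m. F k i j *\<^sub>R ymod w N (int t - k) j)
      = (\<Sum>k\<in>KK n. \<Sum>j<m. G k i j *\<^sub>R ymod w N (int t - k) j)"
  proof -
    have "- (\<Sum>k\<in>KK n. \<Sum>j<m. F k i j *\<^sub>R ymod w N (int t - k) j)
      = - (\<Sum>k\<in>KK n. \<Sum>j<m. G k i j *\<^sub>R ymod w N (int t - k) j)"
      using rF rG i unfolding represents_def KKeq by simp
    then show ?thesis by simp
  qed
  then have Z: "(\<Sum>k\<in>KK n. \<Sum>j<m. D k j *\<^sub>R w (g k) j) = 0"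
    by (simp add: D_def wg scaleR_diff_left sum_subtractf)
  define c where "c = (\<lambda>s j. \<Sum>k\<in>KK n. if s = g k then D k j else 0)"
  have "(\<Sum>s<N. \<Sum>j<m. c s j *\<^sub>R w s j) = (\<Sum>s<N. \<Sum>j<m. \<Sum>k\<in>KK n. (if s = g k then D k j *\<^sub>R w (g k) j else 0))"
    unfolding c_def by (simp add: scaleR_sum_left if_distrib[of "\<lambda>r. r *\<^sub>R _"] cong: if_cong)
  also have "\<dots> = (\<Sum>k\<in>KK n. \<Sum>j<m. \<Sum>s<N. (if s = g k then D k j *\<^sub>R w (g k) j else 0))"
  proof -
    have "(\<Sum>s<N. \<Sum>j<m. \<Sum>k\<in>KK n. (if s = g k then D k j *\<^sub>R w (g k) j else 0))
       = (\<Sum>s<N. \<Sum>k\<in>KK n. \<Sum>j<m. (if s = g k then D k j *\<^sub>R w (g k) j else 0))"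
      by (rule sum.cong[OF refl], rule sum.swap)
    also have "\<dots> = (\<Sum>k\<in>KK n. \<Sum>s<N. \<Sum>j<m. (if s = g k then D k j *\<^sub>R w (g k) j else 0))"
      by (rule sum.swap)
    also have "\<dots> = (\<Sum>k\<in>KK n. \<Sum>j<m. \<Sum>s<N. (if s = g k then D k j *\<^sub>R w (g k) j else 0))"
      by (rule sum.cong[OF refl], rule sum.swap)
    finally show ?thesis .
  qed
  also have "\<dots> = (\<Sum>k\<in>KK n. \<Sum>j<m. D k j *\<^sub>R w (g k) j)"
    using gN by (simp add: sum.delta)
  finally have v0: "(\<Sum>s<N. \<Sum>j<m. c s j *\<^sub>R w s j) = 0" using Z by simp
  have "\<not> (\<exists>s<N. \<exists>j<m. c s j \<noteq> 0)"
  proof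
    assume "\<exists>s<N. \<exists>j<m. c s j \<noteq> 0"
    then have "(\<Sum>t<N. \<Sum>s<N. \<Sum>i<m. \<Sum>j<m. c t i * c s j * inner (w t i) (w s j)) > 0"
      using fr unfolding full_rank_def by blast
    then show False unfolding quad v0 by simp
  qed
  then have "c (g k0) j0 = 0" using gN j0 by blast
  moreover have "c (g k0) j0 = D k0 j0"
  proof -
    have "(\<Sum>k\<in>KK n. if g k0 = g k then D k j0 else 0) = (\<Sum>k\<in>KK n. if k = k0 then D k j0 else 0)"
    proof (intro sum.cong refl)
      fix k assume k: "k \<in> KK n"
      have "g k0 = g k \<longleftrightarrow> k = k0"
      proof
        assume "g k0 = g k"
        then have "(int t - k0) mod int N = (int t - k) mod int N"
          unfolding g_def using N0 by (simp add: nat_eq_iff)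
        then show "k = k0" using KK_inj[OF k0 k N] by metis
      qed simp
      then show "(if g k0 = g k then D k j0 else 0) = (if k = k0 then D k j0 else 0)" by simp
    qed
    then show ?thesis unfolding c_def using k0 finite_KK by (simp add: sum.delta')
  qed
  ultimately show ?thesis by (simp add: D_def)
qed


theorem lemma1:
  fixes y :: "nat \<Rightarrow> nat \<Rightarrow> 'h::real_inner"
    and m n N :: nat
  assumes "m \<ge> 1" and "n \<ge> 1" and "N > 2 * n"
    and "stationary y m N"
    and "reciprocal y m N n"
  shows "(\<exists>F. \<forall>t<N. represents y m N n t F)
    \<and> (full_rank y m N \<longrightarrow>
        (\<exists>F. (\<forall>t<N. represents y m N n t F)
           \<and> (\<forall>t<N. \<forall>G. represents y m N n t G \<longrightarrow>
                (\<forall>k\<in>{-int n..int n} - {0}. \<forall>i<m. \<forall>j<m. G k i j = F k i j))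
           \<and> (\<forall>z :: nat \<Rightarrow> nat \<Rightarrow> 'g::real_inner.
                stationary z m N \<and> reciprocal z m N n \<and> full_rank z m N
                \<and> (\<forall>k\<le>2 * n. \<forall>i<m. \<forall>j<m. lag z N (int k) i j = lag y N (int k) i j)
                \<longrightarrow> (\<forall>t<N. represents z m N n t F))))"
proof -
  obtain F where r0: "represents y m N n 0 F" using exists_rep0[OF assms(5,3,2)] by blast
  have all: "\<forall>t<N. represents y m N n t F" using shift[OF assms(4,3) r0] by blast
  have un: "\<forall>t<N. \<forall>G. represents y m N n t G \<longrightarrow>
                (\<forall>k\<in>{-int n..int n} - {0}. \<forall>i<m. \<forall>j<m. G k i j = F k i j)"
    if fr: "full_rank y m N"
  proof (intro allI impI ballI)
    fix t G k i j assume t: "t < N" and rG: "represents y m N n t G"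
      and k: "k \<in> {-int n..int n} - {0}" and i: "i < m" and j: "j < m"
    have "k \<in> KK n" using k by (simp add: KK_def)
    then show "G k i j = F k i j" using uniq[OF fr assms(3) t all[rule_format, OF t] rG _ i j] by simp
  qed
  have tr: "\<forall>z :: nat \<Rightarrow> nat \<Rightarrow> 'g::real_inner.
                stationary z m N \<and> reciprocal z m N n \<and> full_rank z m N
                \<and> (\<forall>k\<le>2 * n. \<forall>i<m. \<forall>j<m. lag z N (int k) i j = lag y N (int k) i j)
                \<longrightarrow> (\<forall>t<N. represents z m N n t F)"
  proof (intro allI impI)
    fix z :: "nat \<Rightarrow> nat \<Rightarrow> 'g" and t
    assume h: "stationary z m N \<and> reciprocal z m N n \<and> full_rank z m N
                \<and> (\<forall>k\<le>2 * n. \<forall>i<m. \<forall>j<m. lag z N (int k) i j = lag y N (int k) i j)"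
      and t: "t < N"
    from h have sz: "stationary z m N" and rz: "reciprocal z m N n"
      and L: "\<forall>k\<le>2 * n. \<forall>i<m. \<forall>j<m. lag z N (int k) i j = lag y N (int k) i j" by simp_all
    have "represents z m N n 0 F"
      by (rule transfer_rep0[OF assms(4) sz rz assms(3,2) L r0])
    then show "represents z m N n t F" by (rule shift[OF sz assms(3) _ t])
  qed
  have ex1: "\<exists>F. \<forall>t<N. represents y m N n t F" using all by (rule exI[of _ F])
  show ?thesis
  proof (intro conjI impI)
    show "\<exists>F. \<forall>t<N. represents y m N n t F" by (rule ex1)
  next
    assume fr: "full_rank y m N"
    show "\<exists>F. (\<forall>t<N. represents y m N n t F)
           \<and> (\<forall>t<N. \<forall>G. represents y m N n t G \<longrightarrow>
                (\<forall>k\<in>{-int n..int n} - {0}. \<forall>i<m. \<forall>j<m. G k i j = F k i j))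
           \<and> (\<forall>z :: nat \<Rightarrow> nat \<Rightarrow> 'g::real_inner.
                stationary z m N \<and> reciprocal z m N n \<and> full_rank z m N
                \<and> (\<forall>k\<le>2 * n. \<forall>i<m. \<forall>j<m. lag z N (int k) i j = lag y N (int k) i j)
                \<longrightarrow> (\<forall>t<N. represents z m N n t F))"
      by (rule exI[of _ F], intro conjI, rule all, rule un[OF fr], rule tr)
  qed
qed

end
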